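(* Let $\mathbf{C}=\mathbf{C}_1\,\dot\cup\,\mathbf{C}_2$ and $\mathbf{B}=\mathbf{B}_+\,\dot\cup\,\mathbf{B}'\in\dot{\mathbb{P}}(\mathbb{L}(\mathbf{C}_1))$ with $|\mathbf{B}|=|\mathbf{C}_1|$. Suppose every literal in $\mathbf{B}_+$ and every variable in $\mathbf{C}_2$ has a positive monotonic effect on $D$ relative to $\mathbf{C}$, and $\mathbf{W}$ suffices to adjust for confounding of $\mathbf{C}$ on $D$. If for some $\mathbf{w}$ and some tree $\mathfrak{T}$ on $\mathbf{B}_+$ (all conditioning events having positive probability) $$E[D\mid\mathbf{B}=\mathbf{1},\mathbf{C}_2=\mathbf{0},\mathbf{W}=\mathbf{w}]-\sum_{L\in\mathbf{B}}E[D\mid\mathbf{B}\setminus\{L\}=\mathbf{1},L=0,\mathbf{C}_2=\mathbf{0},\mathbf{W}=\mathbf{w}]+\sum_{\mathbf{E}\in\mathfrak{T}}E[D\mid\mathbf{B}\setminus\mathbf{E}=\mathbf{1},\mathbf{E}=\mathbf{0},\mathbf{C}_2=\mathbf{0},\mathbf{W}=\mathbf{w}]>0,$$ then $\mathbf{B}$ is a minimal sufficient cause of $D$ relative to $\mathbf{C}$ for some $\omega\in\Omega$.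
   Context: $\Omega$ is a population with a probability distribution; events are binary random variables; $\overline{X}=1-X$; $\mathbb{L}(\mathbf{C})=\mathbf{C}\cup\{\overline{X}:X\in\mathbf{C}\}$; $\dot{\mathbb{P}}(\mathbb{L}(\mathbf{C}))$ is the set of subsets of $\mathbb{L}(\mathbf{C})$ not containing both $X$ and $\overline{X}$; $(L)_{\mathbf{c}}$ is the value of literal $L$ under assignment $\mathbf{c}$; $\bigwedge(\mathbf{B})=\min_{L\in\mathbf{B}}L$. Potential outcomes $D_{\mathbf{c}}(\omega)\in\{0,1\}$; consistency $D(\omega)=D_{\mathbf{C}(\omega)}(\omega)$. Conditioning events such as $\{\mathbf{B}\setminus\mathbf{E}=\mathbf{1},\mathbf{E}=\mathbf{0}\}$ mean the literals in $\mathbf{E}$ are 0 and the other literals of $\mathbf{B}$ are 1. $\mathbf{W}$ suffices to adjust for confounding of $\mathbf{C}$ on $D$ if $D_{\mathbf{c}}$ is independent of $\mathbf{C}$ given $\mathbf{W}=\mathbf{w}$ for all $\mathbf{c},\mathbf{w}$. A literal $L$ (or variable, viewed as the literal $X$) has a positive monotonic effect on $D$ relative to $\mathbf{C}$ if for all $\omega$ and all assignments $\mathbf{c},\mathbf{c}'$ differing only in the variable underlying $L$ with $(L)_{\mathbf{c}}=1,(L)_{\mathbf{c}'}=0$, $D_{\mathbf{c}}(\omega)\ge D_{\mathbf{c}'}(\omega)$. A tree on a finite set $\mathbf{S}$ is a set $\mathfrak{T}$ of 2-element subsets of $\mathbf{S}$ with $|\mathfrak{T}|=|\mathbf{S}|-1$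 connecting all elements (empty if $|\mathbf{S}|\le1$). $\mathbf{B}$ is a sufficient cause for $D$ relative to $\mathbf{C}$ for $\omega$ if some $\mathbf{c}^*$ has $(\bigwedge(\mathbf{B}))_{\mathbf{c}^*}=1$ and $D_{\mathbf{c}}(\omega)=1$ whenever $(\bigwedge(\mathbf{B}))_{\mathbf{c}}=1$; minimal if no proper subset is such a sufficient cause. *)

theory Defs
  imports "HOL-Probability.Probability"
begin

datatype 'v lit = Pos 'v | Neg 'v

fun var :: "'v lit \<Rightarrow> 'v" where
  "var (Pos X) = X" | "var (Neg X) = X"

fun lval :: "'v lit \<Rightarrow> ('v \<Rightarrow> bool) \<Rightarrow> bool" where
  "lval (Pos X) c = c X" | "lval (Neg X) c = (\<not> c X)"

definition Lits :: "'v set \<Rightarrow> 'v lit set" where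
  "Lits C = Pos ` C \<union> Neg ` C"

definition consistent_lits :: "'v lit set \<Rightarrow> bool" where
  "consistent_lits B = (\<forall>X. \<not> (Pos X \<in> B \<and> Neg X \<in> B))"

text \<open>Assignments c of the variables in C (canonically False outside C).\<close>
definition assignments :: "'v set \<Rightarrow> ('v \<Rightarrow> bool) set" where
  "assignments C = {c. \<forall>X. X \<notin> C \<longrightarrow> c X = False}"

definition obs_asg :: "'v set \<Rightarrow> ('v \<Rightarrow> 'o \<Rightarrow> bool) \<Rightarrow> 'o \<Rightarrow> ('v \<Rightarrow> bool)" where
  "obs_asg C val \<omega> = (\<lambda>X. if X \<in> C then val X \<omega> else False)"

definition pos_monotonic ::
  "'v set \<Rightarrow> (('v \<Rightarrow> bool) \<Rightarrow> 'o \<Rightarrow> bool) \<Rightarrow> 'v lit \<Rightarrow> bool" where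
  "pos_monotonic C Dpo L =
     (\<forall>\<omega> c c'. c \<in> assignments C \<longrightarrow> c' \<in> assignments C \<longrightarrow>
        (\<forall>Y. Y \<noteq> var L \<longrightarrow> c Y = c' Y) \<longrightarrow> lval L c \<longrightarrow> \<not> lval L c' \<longrightarrow>
        (Dpo c' \<omega> \<longrightarrow> Dpo c \<omega>))"

text \<open>W suffices to adjust for confounding of C on D: D_c is independent of C
  given W = w, for all c and w (product form of conditional independence).\<close>
definition suff_adjust ::
  "'o pmf \<Rightarrow> 'v set \<Rightarrow> ('v \<Rightarrow> 'o \<Rightarrow> bool) \<Rightarrow> ('o \<Rightarrow> 'w) \<Rightarrow> (('v \<Rightarrow> bool) \<Rightarrow> 'o \<Rightarrow> bool) \<Rightarrow> bool" where
  "suff_adjust p C val W Dpo =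
     (\<forall>c \<in> assignments C. \<forall>w a d.
        measure_pmf.prob p {\<omega>. Dpo c \<omega> = d \<and> obs_asg C val \<omega> = a \<and> W \<omega> = w}
          * measure_pmf.prob p {\<omega>. W \<omega> = w}
        = measure_pmf.prob p {\<omega>. Dpo c \<omega> = d \<and> W \<omega> = w}
          * measure_pmf.prob p {\<omega>. obs_asg C val \<omega> = a \<and> W \<omega> = w})"

definition is_tree :: "'a set \<Rightarrow> 'a set set \<Rightarrow> bool" where
  "is_tree S T =
     (T \<subseteq> {e. \<exists>a b. a \<in> S \<and> b \<in> S \<and> a \<noteq> b \<and> e = {a, b}} \<and>
      card T = card S - 1 \<and>
      (\<forall>x\<in>S. \<forall>y\<in>S. (x, y) \<in> {(a, b). {a, b} \<in> T}\<^sup>*))"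

definition sufficient_cause ::
  "'v set \<Rightarrow> (('v \<Rightarrow> bool) \<Rightarrow> 'o \<Rightarrow> bool) \<Rightarrow> 'v lit set \<Rightarrow> 'o \<Rightarrow> bool" where
  "sufficient_cause C Dpo B \<omega> =
     ((\<exists>c \<in> assignments C. \<forall>L\<in>B. lval L c) \<and>
      (\<forall>c \<in> assignments C. (\<forall>L\<in>B. lval L c) \<longrightarrow> Dpo c \<omega>))"

definition minimal_sufficient_cause ::
  "'v set \<Rightarrow> (('v \<Rightarrow> bool) \<Rightarrow> 'o \<Rightarrow> bool) \<Rightarrow> 'v lit set \<Rightarrow> 'o \<Rightarrow> bool" where
  "minimal_sufficient_cause C Dpo B \<omega> =
     (sufficient_cause C Dpo B \<omega> \<and> (\<forall>B0. B0 \<subset> B \<longrightarrow> \<not> sufficient_cause C Dpo B0 \<omega>))"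

definition cond_event ::
  "('v \<Rightarrow> 'o \<Rightarrow> bool) \<Rightarrow> 'v lit set \<Rightarrow> 'v lit set \<Rightarrow> 'v set \<Rightarrow> ('o \<Rightarrow> 'w) \<Rightarrow> 'w \<Rightarrow> 'o set" where
  "cond_event val B E C2 W w =
     {\<omega>. (\<forall>L \<in> B - E. lval L (\<lambda>X. val X \<omega>)) \<and> (\<forall>L \<in> E. \<not> lval L (\<lambda>X. val X \<omega>)) \<and>
          (\<forall>X \<in> C2. \<not> val X \<omega>) \<and> W \<omega> = w}"

definition cexp :: "'o pmf \<Rightarrow> ('o \<Rightarrow> bool) \<Rightarrow> 'o set \<Rightarrow> real" where
  "cexp p D A = measure_pmf.prob p {\<omega> \<in> A. D \<omega>} / measure_pmf.prob p A"

end

theory Submission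
  imports Defs
begin


lemma ind_int: "integrable (measure_pmf p) (indicator A :: _ \<Rightarrow> real)"
  by (intro integrable_real_indicator) (auto simp: measure_pmf.emeasure_finite less_top[symmetric])

lemma prob_int: "measure_pmf.prob p A = measure_pmf.expectation p (indicator A :: _ \<Rightarrow> real)"
  by simp

lemma reach_edge:
  assumes "(v, r) \<in> {(a, b). {a, b} \<in> T}\<^sup>*" "v \<notin> R" "r \<in> R"
  shows "\<exists>x y. {x, y} \<in> T \<and> x \<notin> R \<and> y \<in> R"
  using assms
proof (induction rule: rtrancl_induct)
  case base then show ?case by simp
next
  case (step y z)
  then show ?case by (cases "y \<in> R") auto
qed

lemma tree_count:
  assumes "finite V" "R \<subseteq> V" "finite T" "\<forall>e\<in>T. e \<subseteq> V"
    "\<forall>v\<in>V. \<exists>r\<in>R. (v, r) \<in> {(a, b). {a, b} \<in> T}\<^sup>*"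
  shows "card (V - R) \<le> card {e\<in>T. \<not> e \<subseteq> R}"
  using assms
proof (induction "card (V - R)" arbitrary: R)
  case 0 then show ?case by simp
next
  case (Suc n)
  then obtain v where v: "v \<in> V" "v \<notin> R"
    by (metis Diff_iff card_0_eq finite_Diff nat.distinct(1) subsetI subset_empty)
  then obtain r where r: "r \<in> R" "(v, r) \<in> {(a, b). {a, b} \<in> T}\<^sup>*" using Suc.prems by blast
  then obtain x y where xy: "{x, y} \<in> T" "x \<notin> R" "y \<in> R" using reach_edge v by metis
  have xV: "x \<in> V" using xy Suc.prems(4) by blast
  have c1: "n = card (V - insert x R)"
    using Suc.hyps(2) xV xy(2) Suc.prems(1)
    by (metis Diff_insert card_Diff_singleton diff_Suc_1 finite_Diff DiffI)
  have IH: "card (V - insert x R) \<le> card {e\<in>T. \<not> e \<subseteq> insert x R}"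
    using Suc.hyps(1)[OF c1] Suc.prems xV by blast
  have sub: "{e\<in>T. \<not> e \<subseteq> insert x R} \<subseteq> {e\<in>T. \<not> e \<subseteq> R} - {{x, y}}"
    using xy by auto
  have "card {e\<in>T. \<not> e \<subseteq> insert x R} \<le> card ({e\<in>T. \<not> e \<subseteq> R} - {{x, y}})"
    using sub Suc.prems(3) by (intro card_mono) auto
  also have "\<dots> = card {e\<in>T. \<not> e \<subseteq> R} - 1"
    using xy Suc.prems(3) by (subst card_Diff_singleton) auto
  finally have "card {e\<in>T. \<not> e \<subseteq> insert x R} \<le> card {e\<in>T. \<not> e \<subseteq> R} - 1" .
  moreover have "card {e\<in>T. \<not> e \<subseteq> R} \<ge> 1"
    using xy Suc.prems(3) by (metis (no_types, lifting) One_nat_def Suc_leI card_gt_0_iff empty_iff finite_subset insert_subset mem_Collect_eq subsetI)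
  ultimately show ?case using IH c1 Suc.hyps(2) by linarith
qed



definition cE :: "'v set \<Rightarrow> 'v lit set \<Rightarrow> 'v lit set \<Rightarrow> 'v \<Rightarrow> bool" where
  "cE C1 B E = (\<lambda>X. X \<in> C1 \<and> (Pos X \<in> B - E \<or> Neg X \<in> E))"

lemma exactly_one:
  assumes "finite C1" "B \<subseteq> Lits C1" "consistent_lits B" "card B = card C1" "X \<in> C1"
  shows "Pos X \<in> B \<or> Neg X \<in> B"
proof -
  have inj: "inj_on var B"
  proof (rule inj_onI)
    fix L L' assume "L \<in> B" "L' \<in> B" "var L = var L'"
    then show "L = L'" using assms(3) unfolding consistent_lits_def
      by (cases L; cases L') auto
  qed
  have sub: "var ` B \<subseteq> C1" using assms(2) unfolding Lits_def by auto
  have "card (var ` B) = card C1" using card_image[OF inj] assms(4) by simp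
  then have "var ` B = C1" using card_subset_eq[OF assms(1) sub] by simp
  then obtain L where "L \<in> B" "var L = X" using assms(5) by blast
  then show ?thesis by (cases L) auto
qed

lemma lval_cE:
  assumes "B \<subseteq> Lits C1" "consistent_lits B" "L \<in> B" "E \<subseteq> B"
  shows "lval L (cE C1 B E) = (L \<notin> E)"
  using assms unfolding cE_def consistent_lits_def Lits_def
  by (cases L) auto

lemma cE_assign: "C1 \<subseteq> C \<Longrightarrow> cE C1 B E \<in> assignments C"
  unfolding cE_def assignments_def by auto

lemma cE_ins: "Y \<noteq> var L \<Longrightarrow> cE C1 B (insert L E) Y = cE C1 B E Y"
  unfolding cE_def by auto

lemma mono_step:
  assumes "pos_monotonic C Dpo L" "C1 \<subseteq> C" "L \<in> B" "E \<subseteq> B" "L \<notin> E"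
    "B \<subseteq> Lits C1" "consistent_lits B" "Dpo (cE C1 B (insert L E)) \<omega>"
  shows "Dpo (cE C1 B E) \<omega>"
proof -
  have "lval L (cE C1 B E)" using lval_cE[OF assms(6,7,3,4)] assms(5) by simp
  moreover have "\<not> lval L (cE C1 B (insert L E))" using lval_cE[OF assms(6,7,3)] assms(3,4) by simp
  moreover have "\<forall>Y. Y \<noteq> var L \<longrightarrow> cE C1 B E Y = cE C1 B (insert L E) Y" using cE_ins by metis
  ultimately show ?thesis
    using assms(1)[unfolded pos_monotonic_def, rule_format, of "cE C1 B E" "cE C1 B (insert L E)" \<omega>]
      assms(8) cE_assign[OF assms(2)] cE_ins by simp
qed

lemma cond_eq:
  assumes "finite C1" "B \<subseteq> Lits C1" "consistent_lits B" "card B = card C1" "E \<subseteq> B"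
    "C1 \<inter> C2 = {}"
  shows "cond_event val B E C2 W w = {\<omega>. obs_asg (C1 \<union> C2) val \<omega> = cE C1 B E \<and> W \<omega> = w}"
proof (intro set_eqI iffI)
  fix \<omega> assume a: "\<omega> \<in> cond_event val B E C2 W w"
  have "obs_asg (C1 \<union> C2) val \<omega> X = cE C1 B E X" for X
  proof (cases "X \<in> C1")
    case True
    then have e: "Pos X \<in> B \<or> Neg X \<in> B" using exactly_one assms by metis
    have n: "\<not> (Pos X \<in> B \<and> Neg X \<in> B)" using assms(3) unfolding consistent_lits_def by auto
    have a1: "\<forall>L\<in>B - E. lval L (\<lambda>X. val X \<omega>)" and a2: "\<forall>L\<in>E. \<not> lval L (\<lambda>X. val X \<omega>)"
      using a unfolding cond_event_def by auto
    have "X \<notin> C2" using True assms(6) by auto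
    then have ob: "obs_asg (C1 \<union> C2) val \<omega> X = val X \<omega>" using True unfolding obs_asg_def by auto
    show ?thesis
    proof (cases "Pos X \<in> B")
      case True
      then have "Neg X \<notin> B" using n by blast
      then have "Neg X \<notin> E" using assms(5) by blast
      then show ?thesis using a1[rule_format, of "Pos X"] a2[rule_format, of "Pos X"] True \<open>X \<in> C1\<close> ob unfolding cE_def
        by (cases "Pos X \<in> E") auto
    next
      case False
      then have NB: "Neg X \<in> B" using e by blast
      have "Pos X \<notin> E" using assms(5) False by blast
      then show ?thesis using a1[rule_format, of "Neg X"] a2[rule_format, of "Neg X"] NB False \<open>X \<in> C1\<close> ob unfolding cE_def
        by (cases "Neg X \<in> E") auto
    qed
  next
    case False
    then show ?thesis using a unfolding cond_event_def obs_asg_def cE_def by auto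
  qed
  then show "\<omega> \<in> {\<omega>. obs_asg (C1 \<union> C2) val \<omega> = cE C1 B E \<and> W \<omega> = w}"
    using a unfolding cond_event_def by auto
next
  fix \<omega> assume a: "\<omega> \<in> {\<omega>. obs_asg (C1 \<union> C2) val \<omega> = cE C1 B E \<and> W \<omega> = w}"
  then have o: "\<And>X. obs_asg (C1 \<union> C2) val \<omega> X = cE C1 B E X" and ww: "W \<omega> = w" by auto
  have v1: "val X \<omega> = cE C1 B E X" if "X \<in> C1" for X
    using o[of X] that unfolding obs_asg_def by auto
  have v2: "\<not> val X \<omega>" if "X \<in> C2" for X
    using o[of X] that assms(6) unfolding obs_asg_def cE_def by auto
  have l: "lval L (\<lambda>X. val X \<omega>) = (L \<notin> E)" if "L \<in> B" for L
  proof -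
    have "var L \<in> C1" using that assms(2) unfolding Lits_def by (cases L) auto
    then have "lval L (\<lambda>X. val X \<omega>) = lval L (cE C1 B E)" using v1 by (cases L) auto
    then show ?thesis using lval_cE[OF assms(2,3) that assms(5)] by simp
  qed
  show "\<omega> \<in> cond_event val B E C2 W w"
    unfolding cond_event_def using l v2 ww assms(5) by auto
qed

lemma c2_mono:
  assumes "Dpo (cE C1 B {}) \<omega>" "\<forall>X\<in>C2. pos_monotonic (C1 \<union> C2) Dpo (Pos X)"
    "c \<in> assignments (C1 \<union> C2)" "\<forall>L\<in>B. lval L c" "finite C1" "finite C2"
    "B \<subseteq> Lits C1" "consistent_lits B" "card B = card C1" "C1 \<inter> C2 = {}"
  shows "Dpo c \<omega>"
proof -
  define cA where "cA A = (\<lambda>X. cE C1 B {} X \<or> X \<in> A)" for A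
  have step: "Dpo (cA A) \<omega>" if "finite A" "A \<subseteq> C2" for A
    using that
  proof (induction A rule: finite_induct)
    case empty
    then show ?case using assms(1) unfolding cA_def by simp
  next
    case (insert x A)
    have x2: "x \<in> C2" using insert by auto
    have asg: "cA A' \<in> assignments (C1 \<union> C2)" if "A' \<subseteq> C2" for A'
      using that unfolding cA_def cE_def assignments_def by auto
    have "x \<notin> C1" using x2 assms(10) by auto
    then have nx: "\<not> cA A x" using insert(2) unfolding cA_def cE_def by auto
    have yx: "cA (insert x A) x" unfolding cA_def by simp
    have agree: "\<forall>Y. Y \<noteq> var (Pos x) \<longrightarrow> cA (insert x A) Y = cA A Y" unfolding cA_def by auto
    have pm: "pos_monotonic (C1 \<union> C2) Dpo (Pos x)" using assms(2) x2 by auto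
    have "insert x A \<subseteq> C2" "A \<subseteq> C2" using insert by auto
    then show ?case using pm[unfolded pos_monotonic_def, rule_format, of "cA (insert x A)" "cA A" \<omega>]
      asg[of "insert x A"] asg[of A] insert agree nx yx by simp
  qed
  have "c = cA {X\<in>C2. c X}"
  proof
    fix X
    show "c X = cA {X\<in>C2. c X} X"
    proof (cases "X \<in> C1")
      case True
      then have e: "Pos X \<in> B \<or> Neg X \<in> B" using exactly_one assms by metis
      have n: "\<not> (Pos X \<in> B \<and> Neg X \<in> B)" using assms(8) unfolding consistent_lits_def by auto
      have "X \<notin> C2" using True assms(10) by auto
      show ?thesis
      proof (cases "Pos X \<in> B")
        case True
        then have "c X" using assms(4) by fastforce
        then show ?thesis using True \<open>X \<in> C1\<close> unfolding cA_def cE_def by auto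
      next
        case False
        then have NB: "Neg X \<in> B" using e by blast
        then have "\<not> c X" using assms(4) by fastforce
        then show ?thesis using False NB \<open>X \<in> C1\<close> \<open>X \<notin> C2\<close> unfolding cA_def cE_def by auto
      qed
    next
      case False
      then show ?thesis using assms(3) unfolding cA_def cE_def assignments_def by auto
    qed
  qed
  then show ?thesis using step[of "{X\<in>C2. c X}"] assms(6) by auto
qed



lemma comb:
  fixes d :: "'a set \<Rightarrow> bool"
  assumes "finite Bp" "finite Bq" "Bp \<inter> Bq = {}" "is_tree Bp T"
    and mono: "\<forall>E\<in>T. d E \<longrightarrow> (\<forall>a\<in>E. d {a})"
    and pos: "(0::real) < of_bool (d {}) - (\<Sum>L\<in>Bp \<union> Bq. of_bool (d {L})) + (\<Sum>E\<in>T. of_bool (d E))"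
  shows "d {} \<and> (\<forall>L\<in>Bp \<union> Bq. \<not> d {L})"
proof -
  have Tsub: "T \<subseteq> {e. \<exists>a b. a \<in> Bp \<and> b \<in> Bp \<and> a \<noteq> b \<and> e = {a, b}}"
    and cT: "card T = card Bp - 1"
    and conn: "\<forall>x\<in>Bp. \<forall>y\<in>Bp. (x, y) \<in> {(a, b). {a, b} \<in> T}\<^sup>*"
    using assms(4) unfolding is_tree_def by auto
  have TP: "\<forall>e\<in>T. e \<subseteq> Bp" using Tsub by auto
  have finT: "finite T" using finite_subset[of T "Pow Bp"] TP assms(1) by auto
  define S where "S = {L\<in>Bp. d {L}}"
  have SBp: "S \<subseteq> Bp" unfolding S_def by auto
  have finS: "finite S" using SBp assms(1) finite_subset by auto
  have s1: "(\<Sum>E\<in>T. of_bool (d E) :: real) \<le> (\<Sum>E\<in>T. of_bool (E \<subseteq> S))"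
  proof (rule sum_mono)
    fix E assume "E \<in> T"
    then show "of_bool (d E) \<le> (of_bool (E \<subseteq> S) :: real)"
      using mono TP unfolding S_def by auto
  qed
  have s2: "(\<Sum>E\<in>T. of_bool (E \<subseteq> S) :: real) = real (card {E\<in>T. E \<subseteq> S})"
    using finT by (simp add: Collect_conj_eq)
  have bound: "card {E\<in>T. E \<subseteq> S} + (if S = {} then 0 else 1) \<le> card S"
  proof (cases "S = {}")
    case True
    then have "{E\<in>T. E \<subseteq> S} = {}" using Tsub by auto
    then show ?thesis using True by simp
  next
    case False
    then obtain s where s: "s \<in> S" by auto
    have reach: "\<forall>v\<in>Bp. \<exists>r\<in>S. (v, r) \<in> {(a, b). {a, b} \<in> T}\<^sup>*"
      using conn s SBp by blast
    have tc: "card (Bp - S) \<le> card {e\<in>T. \<not> e \<subseteq> S}"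
      using tree_count[OF assms(1) SBp finT TP reach] .
    have split: "card T = card {E\<in>T. E \<subseteq> S} + card {e\<in>T. \<not> e \<subseteq> S}"
    proof -
      have "T = {E\<in>T. E \<subseteq> S} \<union> {e\<in>T. \<not> e \<subseteq> S}" by auto
      then have "card T = card ({E\<in>T. E \<subseteq> S} \<union> {e\<in>T. \<not> e \<subseteq> S})" by simp
      also have "\<dots> = card {E\<in>T. E \<subseteq> S} + card {e\<in>T. \<not> e \<subseteq> S}"
        by (rule card_Un_disjoint) (use finT in auto)
      finally show ?thesis .
    qed
    have "card (Bp - S) = card Bp - card S" using card_Diff_subset[OF finS SBp] .
    moreover have "card S \<le> card Bp" using card_mono[OF assms(1) SBp] .
    moreover have "card S \<ge> 1" using finS s by (metis One_nat_def Suc_leI card_gt_0_iff empty_iff)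
    ultimately show ?thesis using False tc split cT by simp
  qed
  have s3: "(\<Sum>L\<in>Bp \<union> Bq. of_bool (d {L}) :: real) = real (card S) + real (card (Bq \<inter> {x. d {x}}))"
  proof -
    have "(\<Sum>L\<in>Bp \<union> Bq. of_bool (d {L}) :: real) = (\<Sum>L\<in>Bp. of_bool (d {L})) + (\<Sum>L\<in>Bq. of_bool (d {L}))"
      by (rule sum.union_disjoint) (use assms(1,2,3) in auto)
    moreover have "Bp \<inter> {x. d {x}} = S" unfolding S_def by auto
    ultimately show ?thesis using assms(1,2) by simp
  qed
  have b2: "real (card {E\<in>T. E \<subseteq> S}) + (if S = {} then 0 else 1) \<le> real (card S)"
    using bound by (cases "S = {}") auto
  have "d {} \<and> card (Bq \<inter> {x. d {x}}) = 0 \<and> S = {}"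
  proof (rule ccontr)
    assume "\<not> ?thesis"
    then have dis: "\<not> d {} \<or> card (Bq \<inter> {x. d {x}}) \<ge> 1 \<or> S \<noteq> {}" by auto
    have b3: "real (card {E\<in>T. E \<subseteq> S}) \<le> real (card S)" using b2 by (cases "S = {}") auto
    have ob: "of_bool (d {}) \<le> (1::real)" by simp
    have obn: "0 \<le> real (card (Bq \<inter> {x. d {x}}))" by simp
    from dis show False
    proof (elim disjE)
      assume "\<not> d {}"
      then have "of_bool (d {}) = (0::real)" by simp
      then show False using pos s1 s2 s3 b3 obn by linarith
    next
      assume "card (Bq \<inter> {x. d {x}}) \<ge> 1"
      then have "real (card (Bq \<inter> {x. d {x}})) \<ge> 1" by simp
      then show False using pos s1 s2 s3 b3 ob by linarith
    next
      assume "S \<noteq> {}"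
      then have "real (card {E\<in>T. E \<subseteq> S}) + 1 \<le> real (card S)" using b2 by simp
      then show False using pos s1 s2 s3 ob obn by linarith
    qed
  qed
  then show ?thesis using assms(2) unfolding S_def by auto
qed



theorem mainTheorem11:
  fixes p :: "'o pmf"
    and val :: "'v \<Rightarrow> 'o \<Rightarrow> bool"
    and D :: "'o \<Rightarrow> bool"
    and Dpo :: "('v \<Rightarrow> bool) \<Rightarrow> 'o \<Rightarrow> bool"
    and W :: "'o \<Rightarrow> 'w"
    and C1 C2 :: "'v set"
    and Bp Bq :: "'v lit set"
    and T :: "'v lit set set"
    and w :: 'w
  assumes "finite C1" and "finite C2" and "C1 \<inter> C2 = {}"
    and "Bp \<inter> Bq = {}" and "Bp \<union> Bq \<subseteq> Lits C1" and "consistent_lits (Bp \<union> Bq)"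
    and "card (Bp \<union> Bq) = card C1"
    and consistency: "\<forall>\<omega>. D \<omega> = Dpo (obs_asg (C1 \<union> C2) val \<omega>) \<omega>"
    and "\<forall>L \<in> Bp. pos_monotonic (C1 \<union> C2) Dpo L"
    and "\<forall>X \<in> C2. pos_monotonic (C1 \<union> C2) Dpo (Pos X)"
    and "suff_adjust p (C1 \<union> C2) val W Dpo"
    and "is_tree Bp T"
    and "measure_pmf.prob p (cond_event val (Bp \<union> Bq) {} C2 W w) > 0"
    and "\<forall>L \<in> Bp \<union> Bq. measure_pmf.prob p (cond_event val (Bp \<union> Bq) {L} C2 W w) > 0"
    and "\<forall>E \<in> T. measure_pmf.prob p (cond_event val (Bp \<union> Bq) E C2 W w) > 0"
    and "cexp p D (cond_event val (Bp \<union> Bq) {} C2 W w)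
         - (\<Sum>L \<in> Bp \<union> Bq. cexp p D (cond_event val (Bp \<union> Bq) {L} C2 W w))
         + (\<Sum>E \<in> T. cexp p D (cond_event val (Bp \<union> Bq) E C2 W w)) > 0"
  shows "\<exists>\<omega> \<in> set_pmf p. minimal_sufficient_cause (C1 \<union> C2) Dpo (Bp \<union> Bq) \<omega>"
proof -
  define B where "B = Bp \<union> Bq"
  have finC1: "finite C1" by fact
  have BL: "B \<subseteq> Lits C1" and cons: "consistent_lits B" and cardB: "card B = card C1"
    using assms(5,6,7) unfolding B_def by auto
  have finB: "finite B" using BL finC1 unfolding Lits_def by (meson finite_Un finite_imageI finite_subset)
  have finBp: "finite Bp" and finBq: "finite Bq" using finB unfolding B_def by auto
  have Tsub: "T \<subseteq> {e. \<exists>a b. a \<in> Bp \<and> b \<in> Bp \<and> a \<noteq> b \<and> e = {a, b}}"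
    using assms(12) unfolding is_tree_def by auto
  have finT: "finite T" using finite_subset[of T "Pow Bp"] Tsub finBp by auto
  have TB: "\<forall>E\<in>T. E \<subseteq> B" using Tsub unfolding B_def by auto
  define cc where "cc E = cE C1 B E" for E
  define Q where "Q E = cond_event val B E C2 W w" for E
  define Sev where "Sev E = {\<omega>. Dpo (cc E) \<omega> \<and> W \<omega> = w}" for E
  define A where "A E = measure_pmf.prob p (Sev E)" for E
  define PW where "PW = measure_pmf.prob p {\<omega>. W \<omega> = w}"
  have asg: "cc E \<in> assignments (C1 \<union> C2)" for E unfolding cc_def by (rule cE_assign) auto
  have Qeq: "Q E = {\<omega>. obs_asg (C1 \<union> C2) val \<omega> = cc E \<and> W \<omega> = w}" if "E \<subseteq> B" for E
    unfolding Q_def cc_def using cond_eq[OF finC1 BL cons cardB that assms(3)] .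
  have cexp_eq: "cexp p D (Q E) = A E / PW" if "E \<subseteq> B" "measure_pmf.prob p (Q E) > 0" for E
  proof -
    have num: "{\<omega> \<in> Q E. D \<omega>} = {\<omega>. Dpo (cc E) \<omega> = True \<and> obs_asg (C1 \<union> C2) val \<omega> = cc E \<and> W \<omega> = w}"
      using Qeq[OF that(1)] consistency by auto
    have sa: "measure_pmf.prob p {\<omega>. Dpo (cc E) \<omega> = True \<and> obs_asg (C1 \<union> C2) val \<omega> = cc E \<and> W \<omega> = w}
          * PW = measure_pmf.prob p {\<omega>. Dpo (cc E) \<omega> = True \<and> W \<omega> = w}
          * measure_pmf.prob p {\<omega>. obs_asg (C1 \<union> C2) val \<omega> = cc E \<and> W \<omega> = w}"
      using assms(11) asg[of E] unfolding suff_adjust_def PW_def by blast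
    have "measure_pmf.prob p (Q E) \<le> PW"
      unfolding PW_def Qeq[OF that(1)] by (rule measure_pmf.finite_measure_mono) auto
    then have PWpos: "PW > 0" using that(2) by linarith
    have "cexp p D (Q E) = measure_pmf.prob p {\<omega>. Dpo (cc E) \<omega> = True \<and> obs_asg (C1 \<union> C2) val \<omega> = cc E \<and> W \<omega> = w}
           / measure_pmf.prob p (Q E)" unfolding cexp_def num ..
    also have "\<dots> = A E / PW"
      using sa PWpos that(2) unfolding A_def Sev_def Qeq[OF that(1)]
      by (simp add: field_simps)
    finally show ?thesis .
  qed
  have PWpos: "PW > 0"
  proof -
    have "measure_pmf.prob p (Q {}) \<le> PW"
      unfolding PW_def Qeq[OF empty_subsetI] by (rule measure_pmf.finite_measure_mono) auto
    then show ?thesis using assms(13) unfolding Q_def B_def by linarith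
  qed
  have h: "0 < A {} / PW - (\<Sum>L\<in>B. A {L} / PW) + (\<Sum>E\<in>T. A E / PW)"
  proof -
    have e1: "cexp p D (Q {}) = A {} / PW" using cexp_eq assms(13) unfolding Q_def B_def by auto
    have e2: "(\<Sum>L\<in>B. cexp p D (Q {L})) = (\<Sum>L\<in>B. A {L} / PW)"
      by (rule sum.cong) (use cexp_eq assms(14) in \<open>auto simp: Q_def B_def\<close>)
    have e3: "(\<Sum>E\<in>T. cexp p D (Q E)) = (\<Sum>E\<in>T. A E / PW)"
      by (rule sum.cong) (use cexp_eq assms(15) TB in \<open>auto simp: Q_def B_def\<close>)
    show ?thesis using assms(16) e1 e2 e3 unfolding Q_def B_def by simp
  qed
  have h2: "0 < A {} - (\<Sum>L\<in>B. A {L}) + (\<Sum>E\<in>T. A E)"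
  proof -
    have "A {} / PW - (\<Sum>L\<in>B. A {L} / PW) + (\<Sum>E\<in>T. A E / PW)
        = (A {} - (\<Sum>L\<in>B. A {L}) + (\<Sum>E\<in>T. A E)) / PW"
      by (simp add: sum_divide_distrib diff_divide_distrib add_divide_distrib)
    then show ?thesis using h PWpos by (simp add: zero_less_divide_iff)
  qed
  define g :: "'o \<Rightarrow> real" where "g \<omega> = indicator (Sev {}) \<omega> - (\<Sum>L\<in>B. indicator (Sev {L}) \<omega>)
      + (\<Sum>E\<in>T. indicator (Sev E) \<omega>)" for \<omega>
  have intg: "measure_pmf.expectation p g = A {} - (\<Sum>L\<in>B. A {L}) + (\<Sum>E\<in>T. A E)"
    unfolding g_def A_def
    by (simp add: ind_int integral_sum integrable_sum)
  obtain \<omega> where om: "\<omega> \<in> set_pmf p" "g \<omega> > 0"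
  proof (rule ccontr)
    assume "\<not> thesis"
    then have "\<forall>\<omega>\<in>set_pmf p. g \<omega> \<le> 0" using that by force
    then have "0 \<le> measure_pmf.expectation p (\<lambda>\<omega>. - g \<omega>)"
      by (intro integral_nonneg_AE AE_pmfI) auto
    then show False using intg h2 by simp
  qed
  define d where "d E = Dpo (cc E) \<omega>" for E
  have Ww: "W \<omega> = w"
  proof (rule ccontr)
    assume "W \<omega> \<noteq> w"
    then have "g \<omega> = 0" unfolding g_def Sev_def by (simp add: indicator_def)
    then show False using om by simp
  qed
  have gd: "g \<omega> = of_bool (d {}) - (\<Sum>L\<in>Bp \<union> Bq. of_bool (d {L})) + (\<Sum>E\<in>T. of_bool (d E))"
    unfolding g_def Sev_def d_def B_def using Ww by (simp add: indicator_def)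
  have mono: "\<forall>E\<in>T. d E \<longrightarrow> (\<forall>a\<in>E. d {a})"
  proof (intro ballI impI)
    fix E a assume E: "E \<in> T" and dE: "d E" and a: "a \<in> E"
    obtain x y where xy: "x \<in> Bp" "y \<in> Bp" "x \<noteq> y" "E = {x, y}" using E Tsub by blast
    have pmx: "pos_monotonic (C1 \<union> C2) Dpo x" and pmy: "pos_monotonic (C1 \<union> C2) Dpo y"
      using assms(9) xy by auto
    have xB: "x \<in> B" and yB: "y \<in> B" using xy unfolding B_def by auto
    show "d {a}"
    proof (cases "a = x")
      case True
      have h1: "Dpo (cE C1 B (insert y {x})) \<omega>" using dE xy unfolding d_def cc_def by (simp add: insert_commute)
      have "Dpo (cE C1 B {x}) \<omega>"
        by (rule mono_step[OF pmy _ yB _ _ BL cons h1]) (use xy xB in auto)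
      then show ?thesis using True unfolding d_def cc_def by simp
    next
      case False
      then have ay: "a = y" using a xy by auto
      have h1: "Dpo (cE C1 B (insert x {y})) \<omega>" using dE xy unfolding d_def cc_def by simp
      have "Dpo (cE C1 B {y}) \<omega>"
        by (rule mono_step[OF pmx _ xB _ _ BL cons h1]) (use xy yB in auto)
      then show ?thesis using ay unfolding d_def cc_def by simp
    qed
  qed
  have cm: "d {} \<and> (\<forall>L\<in>Bp \<union> Bq. \<not> d {L})"
    using comb[OF finBp finBq assms(4) assms(12) mono] om(2) gd by simp
  have suff: "sufficient_cause (C1 \<union> C2) Dpo B \<omega>"
    unfolding sufficient_cause_def
  proof (intro conjI ballI impI)
    show "\<exists>c\<in>assignments (C1 \<union> C2). \<forall>L\<in>B. lval L c"
      using asg[of "{}"] lval_cE[OF BL cons] unfolding cc_def by auto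
  next
    fix c assume "c \<in> assignments (C1 \<union> C2)" "\<forall>L\<in>B. lval L c"
    then show "Dpo c \<omega>"
      using c2_mono[of Dpo C1 B \<omega> C2 c] cm assms(10) finC1 assms(2) BL cons cardB assms(3)
      unfolding d_def cc_def by blast
  qed
  have minl: "\<not> sufficient_cause (C1 \<union> C2) Dpo B0 \<omega>" if sub: "B0 \<subset> B" for B0
  proof
    assume sc: "sufficient_cause (C1 \<union> C2) Dpo B0 \<omega>"
    obtain L where L: "L \<in> B" "L \<notin> B0" using sub by blast
    have "\<forall>L'\<in>B0. lval L' (cc {L})"
      using lval_cE[OF BL cons] L sub unfolding cc_def by auto
    then have "Dpo (cc {L}) \<omega>" using sc asg[of "{L}"] unfolding sufficient_cause_def by blast
    then show False using cm L unfolding d_def B_def by auto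
  qed
  show ?thesis
    using om(1) suff minl unfolding minimal_sufficient_cause_def B_def by blast
qed

end
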